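(* Consider a $K$-armed bandit ($K\ge2$) with reward vector $r\in[0,1]^K$ having distinct entries, and let $\pi^*$ be the one-hot policy on the optimal arm. For any temperature $\eta\in(0,\infty)$, the discrete DG update $\theta_{t+1}(a)=\theta_t(a)+\alpha\,w_t(a)U_t(a)$ with sufficiently small step size $\alpha>0$ yields policies $\pi_{\theta_t}$ converging to $\pi^*$.
   Context: Softmax policy $\pi_\theta(a)=e^{\theta(a)}/\sum_{a'}e^{\theta(a')}$; $\pi_t=\pi_{\theta_t}$. $U_t(a):=r(a)-\pi_t^\top r$, $\ell_t(a):=-\log\pi_t(a)$, and $w_t(a):=\sigma(U_t(a)\ell_t(a)/\eta)$ with $\sigma(x)=1/(1+e^{-x})$. Equivalently $\pi_{t+1}(a)=\pi_t(a)e^{\alpha w_t(a)U_t(a)}/\sum_{a'}\pi_t(a')e^{\alpha w_t(a')U_t(a')}$. *)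

theory Defs
  imports Complex_Main
begin

text \<open>Arms are the elements of a finite type 'a (K = CARD('a)).\<close>

definition softmax :: "('a::finite \<Rightarrow> real) \<Rightarrow> 'a \<Rightarrow> real" where
  "softmax \<theta> a = exp (\<theta> a) / (\<Sum>b\<in>UNIV. exp (\<theta> b))"

definition sigmoid :: "real \<Rightarrow> real" where
  "sigmoid x = 1 / (1 + exp (- x))"

definition adv :: "('a::finite \<Rightarrow> real) \<Rightarrow> ('a \<Rightarrow> real) \<Rightarrow> 'a \<Rightarrow> real" where
  "adv r \<theta> a = r a - (\<Sum>b\<in>UNIV. softmax \<theta> b * r b)"

definition surprisal :: "('a::finite \<Rightarrow> real) \<Rightarrow> 'a \<Rightarrow> real" where
  "surprisal \<theta> a = - ln (softmax \<theta> a)"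

definition gate :: "real \<Rightarrow> ('a::finite \<Rightarrow> real) \<Rightarrow> ('a \<Rightarrow> real) \<Rightarrow> 'a \<Rightarrow> real" where
  "gate \<eta> r \<theta> a = sigmoid (adv r \<theta> a * surprisal \<theta> a / \<eta>)"

definition dg_step :: "real \<Rightarrow> real \<Rightarrow> ('a::finite \<Rightarrow> real) \<Rightarrow> ('a \<Rightarrow> real) \<Rightarrow> 'a \<Rightarrow> real" where
  "dg_step \<alpha> \<eta> r \<theta> = (\<lambda>a. \<theta> a + \<alpha> * gate \<eta> r \<theta> a * adv r \<theta> a)"

definition dg_seq :: "real \<Rightarrow> real \<Rightarrow> ('a::finite \<Rightarrow> real) \<Rightarrow> ('a \<Rightarrow> real) \<Rightarrow> nat \<Rightarrow> 'a \<Rightarrow> real" where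
  "dg_seq \<alpha> \<eta> r \<theta>0 t = (dg_step \<alpha> \<eta> r ^^ t) \<theta>0"

text \<open>One-hot policy on the optimal arm (unique when the rewards are distinct).\<close>
definition opt_policy :: "('a \<Rightarrow> real) \<Rightarrow> 'a \<Rightarrow> real" where
  "opt_policy r a = (if (\<forall>b. r b \<le> r a) then 1 else 0)"

end

theory Submission
  imports Defs "HOL-Real_Asymp.Real_Asymp"
begin

definition Jv :: "('a::finite \<Rightarrow> real) \<Rightarrow> ('a \<Rightarrow> real) \<Rightarrow> real" where
  "Jv r \<theta> = (\<Sum>b\<in>UNIV. softmax \<theta> b * r b)"

lemma adv_Jv: "adv r \<theta> a = r a - Jv r \<theta>"
  by (simp add: adv_def Jv_def)

lemma softmax_pos: "softmax \<theta> a > 0"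
  unfolding softmax_def by (intro divide_pos_pos) (auto intro: sum_pos)

lemma softmax_sum: "(\<Sum>a\<in>UNIV. softmax \<theta> a) = 1"
proof -
  have "(\<Sum>b\<in>UNIV. exp (\<theta> b)) > 0" by (auto intro: sum_pos)
  then show ?thesis unfolding softmax_def by (simp add: sum_divide_distrib[symmetric])
qed

lemma softmax_le1: "softmax \<theta> a \<le> 1"
proof -
  have "softmax \<theta> a \<le> (\<Sum>a\<in>UNIV. softmax \<theta> a)"
    by (rule member_le_sum) (auto intro: less_imp_le[OF softmax_pos])
  then show ?thesis by (simp add: softmax_sum)
qed

lemma sigmoid_pos: "0 < sigmoid x"
  unfolding sigmoid_def by (simp add: add_pos_pos)

lemma sigmoid_lt1: "sigmoid x < 1"
  unfolding sigmoid_def by (simp add: add_pos_pos)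

lemma sigmoid_half: "0 \<le> x \<Longrightarrow> sigmoid x \<ge> 1/2"
proof -
  assume "0 \<le> x"
  then have "exp (-x) \<le> 1" by simp
  then show ?thesis unfolding sigmoid_def by (simp add: field_simps add_pos_pos)
qed

lemma surprisal_nonneg: "surprisal \<theta> a \<ge> 0"
  unfolding surprisal_def using softmax_pos[of \<theta> a] softmax_le1[of \<theta> a] by simp

lemma sum_pi_centered: "(\<Sum>b\<in>UNIV. softmax \<theta> b * (r b - c)) = Jv r \<theta> - c"
  by (simp add: right_diff_distrib sum_subtractf Jv_def sum_distrib_right[symmetric] softmax_sum)

lemma Jv_le: "(\<And>b. r b \<le> M) \<Longrightarrow> Jv r \<theta> \<le> M"
proof -
  assume "\<And>b. r b \<le> M"
  then have "Jv r \<theta> - M \<le> 0" unfolding sum_pi_centered[symmetric]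
    by (intro sum_nonpos) (auto intro!: mult_nonneg_nonpos less_imp_le[OF softmax_pos])
  then show ?thesis by simp
qed

lemma Jv_ge: "(\<And>b. M \<le> r b) \<Longrightarrow> M \<le> Jv r \<theta>"
proof -
  assume "\<And>b. M \<le> r b"
  then have "Jv r \<theta> - M \<ge> 0" unfolding sum_pi_centered[symmetric]
    by (intro sum_nonneg) (auto intro!: mult_nonneg_nonneg less_imp_le[OF softmax_pos])
  then show ?thesis by simp
qed

lemma softmax_shift:
  "softmax (\<lambda>a. \<theta> a + h a) a = softmax \<theta> a * exp (h a) / (\<Sum>b\<in>UNIV. softmax \<theta> b * exp (h b))"
proof -
  define S where "S = (\<Sum>b\<in>UNIV. exp (\<theta> b))"
  have S: "S > 0" unfolding S_def by (auto intro: sum_pos)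
  have "(\<Sum>b\<in>UNIV. softmax \<theta> b * exp (h b)) = (\<Sum>b\<in>UNIV. exp (\<theta> b + h b)) / S"
    unfolding softmax_def S_def[symmetric] by (simp add: sum_divide_distrib exp_add)
  then show ?thesis unfolding softmax_def S_def[symmetric] using S by (simp add: exp_add)
qed

lemma Jv_shift:
  "Jv r (\<lambda>a. \<theta> a + h a) - Jv r \<theta> =
     (\<Sum>b\<in>UNIV. softmax \<theta> b * (r b - Jv r \<theta>) * (exp (h b) - 1)) / (\<Sum>b\<in>UNIV. softmax \<theta> b * exp (h b))"
proof -
  define Z where "Z = (\<Sum>b\<in>UNIV. softmax \<theta> b * exp (h b))"
  have "Jv r (\<lambda>a. \<theta> a + h a) - Jv r \<theta> = (\<Sum>b\<in>UNIV. softmax (\<lambda>a. \<theta> a + h a) b * (r b - Jv r \<theta>))"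
    by (simp add: sum_pi_centered)
  also have "\<dots> = (\<Sum>b\<in>UNIV. softmax \<theta> b * exp (h b) * (r b - Jv r \<theta>)) / Z"
    unfolding softmax_shift Z_def[symmetric] by (simp add: sum_divide_distrib)
  also have "(\<Sum>b\<in>UNIV. softmax \<theta> b * exp (h b) * (r b - Jv r \<theta>)) =
     (\<Sum>b\<in>UNIV. softmax \<theta> b * (r b - Jv r \<theta>) * (exp (h b) - 1)) + (\<Sum>b\<in>UNIV. softmax \<theta> b * (r b - Jv r \<theta>))"
    by (simp add: sum.distrib[symmetric] algebra_simps)
  also have "(\<Sum>b\<in>UNIV. softmax \<theta> b * (r b - Jv r \<theta>)) = 0"
    by (simp add: sum_pi_centered)
  finally show ?thesis by (simp add: Z_def)
qed

lemma gate_bounds: "0 < gate \<eta> r \<theta> a" "gate \<eta> r \<theta> a < 1"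
  unfolding gate_def by (rule sigmoid_pos, rule sigmoid_lt1)

lemma gate_half: "0 < \<eta> \<Longrightarrow> 0 \<le> adv r \<theta> a \<Longrightarrow> gate \<eta> r \<theta> a \<ge> 1/2"
  unfolding gate_def by (intro sigmoid_half divide_nonneg_pos mult_nonneg_nonneg surprisal_nonneg) auto

lemma adv_bounds:
  assumes "\<And>a. 0 \<le> r a \<and> r a \<le> 1"
  shows "adv r \<theta> a \<le> 1" "- 1 \<le> adv r \<theta> a"
proof -
  have "0 \<le> Jv r \<theta>" "Jv r \<theta> \<le> 1" using assms by (auto intro!: Jv_le Jv_ge)
  then show "adv r \<theta> a \<le> 1" "- 1 \<le> adv r \<theta> a" using assms[of a] by (auto simp: adv_Jv)
qed

lemma step_facts:
  assumes r01: "\<And>a. 0 \<le> r a \<and> r a \<le> 1" and eta: "0 < \<eta>" and alpha: "0 < \<alpha>"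
  shows "Jv r \<theta> \<le> Jv r (dg_step \<alpha> \<eta> r \<theta>)"
    and "0 \<le> adv r \<theta> a \<Longrightarrow>
         softmax \<theta> a * \<alpha> * (adv r \<theta> a)\<^sup>2 / (2 * exp \<alpha>) \<le> Jv r (dg_step \<alpha> \<eta> r \<theta>) - Jv r \<theta>"
proof -
  define U where "U = adv r \<theta>"
  define w where "w = gate \<eta> r \<theta>"
  define h where "h = (\<lambda>b. \<alpha> * w b * U b)"
  define T where "T = (\<lambda>b. softmax \<theta> b * (r b - Jv r \<theta>) * (exp (h b) - 1))"
  define Z where "Z = (\<Sum>b\<in>UNIV. softmax \<theta> b * exp (h b))"
  have step: "dg_step \<alpha> \<eta> r \<theta> = (\<lambda>a. \<theta> a + h a)"
    unfolding dg_step_def h_def w_def U_def by simp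
  have diff: "Jv r (dg_step \<alpha> \<eta> r \<theta>) - Jv r \<theta> = (\<Sum>b\<in>UNIV. T b) / Z"
    unfolding step Jv_shift T_def Z_def ..
  have w01: "0 < w b" "w b < 1" for b unfolding w_def using gate_bounds by auto
  have U1: "U b \<le> 1" "-1 \<le> U b" for b unfolding U_def using adv_bounds[of r, OF r01] by auto
  have T0: "0 \<le> T b" for b
  proof (cases "0 \<le> U b")
    case True
    then have "0 \<le> h b" unfolding h_def using alpha w01[of b] by simp
    then have "0 \<le> exp (h b) - 1" by simp
    then show ?thesis unfolding T_def using True softmax_pos[of \<theta> b]
      by (simp add: U_def adv_Jv)
  next
    case False
    then have "h b \<le> 0" unfolding h_def using alpha w01[of b]
      by (simp add: mult_nonneg_nonpos)
    then have "exp (h b) - 1 \<le> 0" by simp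
    moreover have "r b - Jv r \<theta> \<le> 0" using False by (simp add: U_def adv_Jv)
    ultimately have "0 \<le> (r b - Jv r \<theta>) * (exp (h b) - 1)" by (rule mult_nonpos_nonpos[rotated])
    then show ?thesis unfolding T_def using softmax_pos[of \<theta> b]
      by (simp add: mult.assoc)
  qed
  have Zpos: "0 < Z" unfolding Z_def by (auto intro!: sum_pos mult_pos_pos softmax_pos)
  have hle: "h b \<le> \<alpha>" for b
  proof -
    have "w b * U b \<le> 1"
    proof (cases "0 \<le> U b")
      case True
      have "w b * U b \<le> 1 * U b" using True w01[of b] by (intro mult_right_mono) auto
      then show ?thesis using U1[of b] by simp
    next
      case False
      have "w b * U b \<le> 0" using False w01[of b] by (intro mult_nonneg_nonpos) auto
      then show ?thesis by simp
    qed
    then have "\<alpha> * (w b * U b) \<le> \<alpha> * 1" using alpha by (intro mult_left_mono) auto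
    then show ?thesis unfolding h_def by (simp add: mult.assoc)
  qed
  have Zle: "Z \<le> exp \<alpha>"
  proof -
    have "Z \<le> (\<Sum>b\<in>UNIV. softmax \<theta> b * exp \<alpha>)"
      unfolding Z_def by (intro sum_mono mult_left_mono) (auto intro: less_imp_le[OF softmax_pos] hle)
    also have "\<dots> = exp \<alpha>" by (simp add: sum_distrib_right[symmetric] softmax_sum)
    finally show ?thesis .
  qed
  have sumT: "0 \<le> (\<Sum>b\<in>UNIV. T b)" by (intro sum_nonneg T0)
  show "Jv r \<theta> \<le> Jv r (dg_step \<alpha> \<eta> r \<theta>)"
  proof -
    have "0 \<le> (\<Sum>b\<in>UNIV. T b) / Z" using sumT Zpos by simp
    then show ?thesis using diff by linarith
  qed
  assume Ua: "0 \<le> adv r \<theta> a"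
  have "T a \<le> (\<Sum>b\<in>UNIV. T b)" by (rule member_le_sum) (auto intro: T0)
  have "softmax \<theta> a * U a * h a \<le> T a"
  proof -
    have "h a \<le> exp (h a) - 1" using exp_ge_add_one_self[of "h a"] by linarith
    then have "U a * h a \<le> U a * (exp (h a) - 1)" using Ua U_def by (simp add: mult_left_mono)
    then show ?thesis unfolding T_def using softmax_pos[of \<theta> a]
      by (simp add: U_def adv_Jv mult.assoc mult_left_mono)
  qed
  moreover have "softmax \<theta> a * \<alpha> * (U a)\<^sup>2 / 2 \<le> softmax \<theta> a * U a * h a"
  proof -
    have "1/2 \<le> w a" unfolding w_def using gate_half[OF eta Ua] .
    then have "(U a)\<^sup>2 * (1/2) \<le> (U a)\<^sup>2 * w a" by (intro mult_left_mono) auto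
    then have "softmax \<theta> a * \<alpha> * ((U a)\<^sup>2 * (1/2)) \<le> softmax \<theta> a * \<alpha> * ((U a)\<^sup>2 * w a)"
      using mult_left_mono[OF \<open>(U a)\<^sup>2 * (1/2) \<le> (U a)\<^sup>2 * w a\<close>, of "softmax \<theta> a * \<alpha>"]
        softmax_pos[of \<theta> a] alpha by simp
    then show ?thesis unfolding h_def by (simp add: power2_eq_square algebra_simps)
  qed
  ultimately have "softmax \<theta> a * \<alpha> * (U a)\<^sup>2 / 2 \<le> (\<Sum>b\<in>UNIV. T b)"
    using \<open>T a \<le> _\<close> by linarith
  moreover have "0 \<le> softmax \<theta> a * \<alpha> * (U a)\<^sup>2 / 2"
    using softmax_pos[of \<theta> a] alpha by simp
  ultimately have "softmax \<theta> a * \<alpha> * (U a)\<^sup>2 / 2 / exp \<alpha> \<le> (\<Sum>b\<in>UNIV. T b) / Z"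
    using Zpos Zle by (intro frac_le) (auto intro: order_trans)
  then show "softmax \<theta> a * \<alpha> * (adv r \<theta> a)\<^sup>2 / (2 * exp \<alpha>) \<le> Jv r (dg_step \<alpha> \<eta> r \<theta>) - Jv r \<theta>"
    unfolding diff U_def by (simp add: divide_divide_eq_left)
qed

lemma incr_at_top:
  fixes D :: "nat \<Rightarrow> real"
  assumes c: "0 < c" and inc: "\<And>n. N \<le> n \<Longrightarrow> D n + c \<le> D (Suc n)"
  shows "filterlim D at_top sequentially"
proof -
  have bnd: "D N + (real n - real N) * c \<le> D n" if "N \<le> n" for n
    using that
  proof (induction rule: dec_induct)
    case base
    then show ?case by simp
  next
    case (step n)
    then show ?case using inc[of n] by (simp add: algebra_simps)
  qed
  have lim: "filterlim (\<lambda>n. D N + (real n - real N) * c) at_top sequentially"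
    using c by real_asymp
  show ?thesis
    by (rule filterlim_at_top_mono[OF lim]) (auto simp: eventually_sequentially intro: bnd)
qed

lemma softmax_ratio: "softmax \<theta> a = softmax \<theta> b * exp (\<theta> a - \<theta> b)"
  unfolding softmax_def by (simp add: exp_diff)

lemma main_conv:
  fixes r :: "'a::finite \<Rightarrow> real"
  assumes r01: "\<And>a. 0 \<le> r a \<and> r a \<le> 1" and inj: "inj r" and eta: "0 < \<eta>" and alpha: "0 < \<alpha>"
  shows "(\<lambda>t. softmax (dg_seq \<alpha> \<eta> r \<theta>0 t) a) \<longlonglongrightarrow> opt_policy r a"
proof -
  define as where "as = (SOME x. r x = Max (range r))"
  have "Max (range r) \<in> range r" by (intro Max_in) auto
  then have "\<exists>x. r x = Max (range r)" by (metis imageE)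
  then have ras: "r as = Max (range r)" unfolding as_def by (rule someI_ex)
  have as: "r b \<le> r as" for b unfolding ras by (intro Max_ge) auto
  have gap: "r b < r as" if "b \<noteq> as" for b
    using as[of b] inj_eq[OF inj, of b as] that by linarith
  define th where "th = dg_seq \<alpha> \<eta> r \<theta>0"
  have th_Suc: "th (Suc t) = dg_step \<alpha> \<eta> r (th t)" for t by (simp add: th_def dg_seq_def)
  define J where "J t = Jv r (th t)" for t
  have Jinc: "incseq J"
    by (rule incseq_SucI) (simp add: J_def th_Suc step_facts(1)[OF r01 eta alpha])
  have Jle: "J t \<le> r as" for t unfolding J_def by (rule Jv_le) (rule as)
  obtain L where L: "J \<longlonglongrightarrow> L" "\<forall>t. J t \<le> L"
    using incseq_convergent[OF Jinc, of "r as"] Jle by blast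
  have Lle: "L \<le> r as" using L(1) Jle by (intro LIMSEQ_le_const2) auto
  have Lopt: "L = r as"
  proof (rule ccontr)
    assume "L \<noteq> r as"
    then have Lt: "L < r as" using Lle by simp
    define \<Delta> where "\<Delta> = r as - L"
    have Dpos: "0 < \<Delta>" using Lt by (simp add: \<Delta>_def)
    have dJ: "(\<lambda>t. J (Suc t) - J t) \<longlonglongrightarrow> 0"
      using tendsto_diff[OF LIMSEQ_Suc[OF L(1)] L(1)] by simp
    have above: "(\<lambda>t. softmax (th t) b) \<longlonglongrightarrow> 0" if rb: "L < r b" for b
    proof -
      define K where "K = \<alpha> * (r b - L)\<^sup>2 / (2 * exp \<alpha>)"
      have Kpos: "0 < K" unfolding K_def using alpha rb by simp
      have ub: "softmax (th t) b \<le> (J (Suc t) - J t) / K" for t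
      proof -
        have U: "r b - L \<le> adv r (th t) b" using L(2)[rule_format, of t] by (simp add: adv_Jv J_def)
        then have U0: "0 \<le> adv r (th t) b" using rb by linarith
        have sq: "(r b - L)\<^sup>2 \<le> (adv r (th t) b)\<^sup>2" using U rb by (intro power_mono) auto
        have "softmax (th t) b * \<alpha> * (adv r (th t) b)\<^sup>2 / (2 * exp \<alpha>) \<le> J (Suc t) - J t"
          using step_facts(2)[OF r01 eta alpha U0] by (simp add: J_def th_Suc)
        moreover have "softmax (th t) b * K \<le> softmax (th t) b * \<alpha> * (adv r (th t) b)\<^sup>2 / (2 * exp \<alpha>)"
          unfolding K_def using sq softmax_pos[of "th t" b] alpha
          by (simp add: divide_right_mono mult_left_mono)
        ultimately have "softmax (th t) b * K \<le> J (Suc t) - J t" by linarith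
        then show ?thesis using Kpos by (simp add: pos_le_divide_eq)
      qed
      have "(\<lambda>t. (J (Suc t) - J t) / K) \<longlonglongrightarrow> 0 / K" by (intro tendsto_divide dJ) (use Kpos in auto)
      then have "(\<lambda>t. (J (Suc t) - J t) / K) \<longlonglongrightarrow> 0" by simp
      then show ?thesis
        by (rule tendsto_sandwich[OF _ _ tendsto_const, rotated 2]) (auto intro!: always_eventually less_imp_le[OF softmax_pos] ub)
    qed
    have below: "(\<lambda>t. softmax (th t) b) \<longlonglongrightarrow> 0" if rb: "r b \<le> L" for b
    proof -
      have "\<forall>\<^sub>F t in sequentially. dist (J t) L < \<Delta> / 4"
        by (intro tendstoD[OF L(1)]) (use Dpos in simp)
      then obtain N where N: "\<And>t. N \<le> t \<Longrightarrow> dist (J t) L < \<Delta> / 4"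
        unfolding eventually_sequentially by blast
      define D where "D t = th t as - th t b" for t
      have Dinc: "D t + \<alpha> * (\<Delta> / 4) \<le> D (Suc t)" if "N \<le> t" for t
      proof -
        have close: "L - J t < \<Delta> / 4" using N[OF that] L(2)[rule_format, of t]
          by (simp add: dist_real_def)
        define g where "g c = gate \<eta> r (th t) c * adv r (th t) c" for c
        have Dstep: "D (Suc t) = D t + \<alpha> * (g as - g b)"
          unfolding D_def th_Suc dg_step_def g_def by (simp add: algebra_simps)
        have Uas: "\<Delta> \<le> adv r (th t) as" using L(2)[rule_format, of t]
          by (simp add: adv_Jv J_def \<Delta>_def)
        have gas: "\<Delta> / 2 \<le> g as"
        proof -
          have "1/2 \<le> gate \<eta> r (th t) as" using Uas Dpos by (intro gate_half[OF eta]) simp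
          then have "1/2 * adv r (th t) as \<le> gate \<eta> r (th t) as * adv r (th t) as"
            using Uas Dpos by (intro mult_right_mono) auto
          then show ?thesis using Uas unfolding g_def by linarith
        qed
        have Ub: "adv r (th t) b \<le> L - J t" using rb by (simp add: adv_Jv J_def)
        have gb: "g b \<le> \<Delta> / 4"
        proof (cases "0 \<le> adv r (th t) b")
          case True
          have "gate \<eta> r (th t) b * adv r (th t) b \<le> 1 * adv r (th t) b"
            using True gate_bounds[of \<eta> r "th t" b] by (intro mult_right_mono) auto
          then show ?thesis using Ub close unfolding g_def by linarith
        next
          case False
          have "gate \<eta> r (th t) b * adv r (th t) b \<le> 0"
            using False gate_bounds[of \<eta> r "th t" b] by (intro mult_nonneg_nonpos) auto
          then show ?thesis using Dpos unfolding g_def by linarith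
        qed
        have "\<alpha> * (\<Delta> / 4) \<le> \<alpha> * (g as - g b)"
          using gas gb alpha by (intro mult_left_mono) auto
        then show ?thesis using Dstep by linarith
      qed
      have Dlim: "filterlim D at_top sequentially"
        by (rule incr_at_top[of "\<alpha> * (\<Delta> / 4)" N D, OF _ Dinc]) (use alpha Dpos in auto)
      have "filterlim (\<lambda>t. - D t) at_bot sequentially"
        using filterlim_uminus_at_top[THEN iffD1, OF Dlim] .
      then have e0: "(\<lambda>t. exp (- D t)) \<longlonglongrightarrow> 0"
        by (rule filterlim_compose[OF exp_at_bot])
      have ub: "softmax (th t) b \<le> exp (- D t)" for t
      proof -
        have "softmax (th t) b = softmax (th t) as * exp (th t b - th t as)" by (rule softmax_ratio)
        also have "\<dots> \<le> 1 * exp (th t b - th t as)"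
          using softmax_le1[of "th t" as] by (intro mult_right_mono) auto
        finally show ?thesis by (simp add: D_def)
      qed
      show ?thesis
        by (rule tendsto_sandwich[OF _ _ tendsto_const e0]) (auto intro!: always_eventually less_imp_le[OF softmax_pos] ub)
    qed
    have all0: "(\<lambda>t. softmax (th t) b) \<longlonglongrightarrow> 0" for b
      using above below by (cases "L < r b") auto
    have "(\<lambda>t. \<Sum>b\<in>UNIV. softmax (th t) b) \<longlonglongrightarrow> (\<Sum>b\<in>(UNIV::'a set). 0)"
      by (intro tendsto_sum all0)
    then have "(\<lambda>t. 1::real) \<longlonglongrightarrow> 0" by (simp add: softmax_sum)
    then show False using LIMSEQ_const_iff[of "1::real" 0] by simp
  qed
  have other0: "(\<lambda>t. softmax (th t) b) \<longlonglongrightarrow> 0" if "b \<noteq> as" for b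
  proof -
    have gb: "0 < r as - r b" using gap[OF that] by simp
    have ub: "softmax (th t) b \<le> (r as - J t) / (r as - r b)" for t
    proof -
      have "(\<Sum>c\<in>UNIV. softmax (th t) c * (r as - r c)) = (\<Sum>c\<in>UNIV. - (softmax (th t) c * (r c - r as)))"
        by (intro sum.cong) (auto simp: algebra_simps)
      also have "\<dots> = r as - J t" by (simp only: sum_negf sum_pi_centered J_def)
      finally have "r as - J t = (\<Sum>c\<in>UNIV. softmax (th t) c * (r as - r c))" by simp
      moreover have "softmax (th t) b * (r as - r b) \<le> (\<Sum>c\<in>UNIV. softmax (th t) c * (r as - r c))"
        by (rule member_le_sum) (auto intro!: mult_nonneg_nonneg less_imp_le[OF softmax_pos] simp: as)
      ultimately show ?thesis using gb by (simp add: pos_le_divide_eq)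
    qed
    have "(\<lambda>t. (r as - J t) / (r as - r b)) \<longlonglongrightarrow> (r as - L) / (r as - r b)"
      using gb by (intro tendsto_intros L(1)) auto
    then have "(\<lambda>t. (r as - J t) / (r as - r b)) \<longlonglongrightarrow> 0" by (simp add: Lopt)
    then show ?thesis
      by (rule tendsto_sandwich[OF _ _ tendsto_const, rotated 2]) (auto intro!: always_eventually less_imp_le[OF softmax_pos] ub)
  qed
  show ?thesis
  proof (cases "a = as")
    case True
    have opt: "opt_policy r a = 1" using True as by (simp add: opt_policy_def)
    have eq: "softmax (th t) as = 1 - (\<Sum>c\<in>UNIV - {as}. softmax (th t) c)" for t
      using softmax_sum[of "th t"] sum.remove[of UNIV as "softmax (th t)"] by simp
    have "(\<lambda>t. 1 - (\<Sum>c\<in>UNIV - {as}. softmax (th t) c)) \<longlonglongrightarrow> 1 - (\<Sum>c\<in>UNIV - {as}. 0)"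
      by (intro tendsto_intros other0) auto
    then have "(\<lambda>t. softmax (th t) as) \<longlonglongrightarrow> 1" unfolding eq by simp
    then show ?thesis using opt True by (simp add: th_def)
  next
    case False
    have opt: "opt_policy r a = 0" using gap[OF False] by (auto simp: opt_policy_def not_le)
    show ?thesis unfolding opt using other0[OF False] by (simp add: th_def)
  qed
qed

theorem theorem7:
  fixes r :: "'a::finite \<Rightarrow> real" and \<eta> :: real and \<theta>0 :: "'a \<Rightarrow> real"
  assumes "card (UNIV :: 'a set) \<ge> 2"
    and "\<And>a. 0 \<le> r a \<and> r a \<le> 1"
    and "inj r"
    and "0 < \<eta>"
  shows "\<exists>\<alpha>0>0. \<forall>\<alpha>. 0 < \<alpha> \<and> \<alpha> \<le> \<alpha>0 \<longrightarrow>
           (\<forall>a. (\<lambda>t. softmax (dg_seq \<alpha> \<eta> r \<theta>0 t) a) \<longlonglongrightarrow> opt_policy r a)"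
  using main_conv[OF assms(2,3,4)] by (intro exI[of _ 1]) auto

end
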